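(* Let $h:\mathbb{R}\to(0,\infty)$ be continuously differentiable and monotone, with $h(x)\to k_{-\infty}$ as $x\to-\infty$ and $h(x)\to k_{+\infty}$ as $x\to+\infty$. Then $$T\ \ge\ \mathrm{sech}^2\left\{\frac12\left|\ln\frac{k_{+\infty}}{k_{-\infty}}\right|+\frac12\int_{-\infty}^{\infty}\frac{|k^2-h^2|}{h}\,\mathrm{d}x\right\}.$$
   Context: Standing setup: $k^2:\mathbb{R}\to\mathbb{R}$ is a piecewise continuous function (it may be negative somewhere) with $k^2(x)\to k_{\pm\infty}^2$ as $x\to\pm\infty$, where $k_{\pm\infty}>0$ and $k^2-k_{\pm\infty}^2$ is integrable near $\pm\infty$. For the equation $u''+k^2(x)u=0$ there is a solution with $u(x)=e^{ik_{-\infty}x}+r\,e^{-ik_{-\infty}x}+o(1)$ as $x\to-\infty$ and $u(x)=\tau\,e^{ik_{+\infty}x}+o(1)$ as $x\to+\infty$; the transmission probability is $T=(k_{+\infty}/k_{-\infty})|\tau|^2$. Here $\mathrm{sech}=1/\cosh$, and if the integral equals $+\infty$ the bound is read as the trivial statement $T\ge 0$. *)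

theory Defs
  imports "HOL-Analysis.Analysis"
begin

definition sech :: "real \<Rightarrow> real" where
  "sech x = 1 / cosh x"

definition locally_finite_set :: "real set \<Rightarrow> bool" where
  "locally_finite_set S \<longleftrightarrow> (\<forall>a b. finite (S \<inter> {a..b}))"

definition piecewise_continuous :: "(real \<Rightarrow> real) \<Rightarrow> bool" where
  "piecewise_continuous f \<longleftrightarrow>
     (\<exists>S. locally_finite_set S \<and> continuous_on (- S) f \<and>
        (\<forall>x\<in>S. \<exists>l. (f \<longlongrightarrow> l) (at_left x)) \<and>
        (\<forall>x\<in>S. \<exists>l. (f \<longlongrightarrow> l) (at_right x)))"

definition is_solution :: "(real \<Rightarrow> real) \<Rightarrow> (real \<Rightarrow> complex) \<Rightarrow> bool" where
  "is_solution k2 u \<longleftrightarrow>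
     (\<exists>u' S. locally_finite_set S \<and>
        (\<forall>x. (u has_vector_derivative u' x) (at x)) \<and>
        continuous_on UNIV u' \<and>
        (\<forall>x. x \<notin> S \<longrightarrow>
           (u' has_vector_derivative (- (complex_of_real (k2 x) * u x))) (at x)))"

end

theory Submission
  imports Defs
begin







lemma lf_finite: "locally_finite_set S \<Longrightarrow> finite (S \<inter> {a..b})"
  by (simp add: locally_finite_set_def)

lemma lf_countable: assumes "locally_finite_set S" shows "countable S"
proof -
  have "S = (\<Union>n::nat. S \<inter> {- real n .. real n})"
  proof (auto)
    fix x assume "x \<in> S"
    obtain n::nat where "\<bar>x\<bar> \<le> real n" using real_arch_simple by blast
    thus "\<exists>n. - real n \<le> x \<and> x \<le> real n" by (intro exI[of _ n]) auto
  qed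
  moreover have "countable (\<Union>n::nat. S \<inter> {- real n .. real n})"
    using lf_finite[OF assms] by (intro countable_UN) (auto intro: countable_finite)
  ultimately show ?thesis by simp
qed

lemma deriv_nonneg_mono:
  fixes f :: "real \<Rightarrow> real"
  assumes "mono f" "(f has_real_derivative l) (at x)" shows "l \<ge> 0"
proof (rule ccontr)
  assume "\<not> l \<ge> 0"
  then obtain d where "d > 0" "\<forall>h>0. h < d \<longrightarrow> f x > f (x + h)"
    using DERIV_neg_dec_right[OF assms(2)] by force
  then have "f x > f (x + d/2)" by auto
  moreover have "f x \<le> f (x + d/2)" using assms(1) \<open>d>0\<close> by (auto simp: mono_def)
  ultimately show False by simp
qed

lemma deriv_nonpos_antimono:
  fixes f :: "real \<Rightarrow> real"
  assumes "antimono f" "(f has_real_derivative l) (at x)" shows "l \<le> 0"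
proof -
  have "mono (\<lambda>x. - f x)" using assms(1) by (auto simp: mono_def antimono_def)
  moreover have "((\<lambda>x. - f x) has_real_derivative -l) (at x)" using assms(2) by (auto intro!: derivative_eq_intros)
  ultimately show ?thesis using deriv_nonneg_mono by fastforce
qed

lemma mono_le_lim_top:
  fixes f :: "real \<Rightarrow> real"
  assumes "mono f" "(f \<longlongrightarrow> l) at_top" shows "f y \<le> l"
  by (rule tendsto_lowerbound[OF assms(2)]) (auto simp: eventually_at_top_linorder intro!: exI[of _ y] monoD[OF assms(1)])

lemma mono_ge_lim_bot:
  fixes f :: "real \<Rightarrow> real"
  assumes "mono f" "(f \<longlongrightarrow> l) at_bot" shows "l \<le> f y"
  by (rule tendsto_upperbound[OF assms(2)]) (auto simp: eventually_at_bot_linorder intro!: exI[of _ y] monoD[OF assms(1)])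

lemma antimono_ge_lim_top:
  fixes f :: "real \<Rightarrow> real"
  assumes "antimono f" "(f \<longlongrightarrow> l) at_top" shows "l \<le> f y"
  by (rule tendsto_upperbound[OF assms(2)]) (auto simp: eventually_at_top_linorder intro!: exI[of _ y] antimonoD[OF assms(1)])

lemma antimono_le_lim_bot:
  fixes f :: "real \<Rightarrow> real"
  assumes "antimono f" "(f \<longlongrightarrow> l) at_bot" shows "f y \<le> l"
  by (rule tendsto_lowerbound[OF assms(2)]) (auto simp: eventually_at_bot_linorder intro!: exI[of _ y] antimonoD[OF assms(1)])

lemma cmod_identity_minus:
  fixes a b :: complex and s :: real
  assumes "s > 0"
  shows "(cmod (of_real s * a - \<i> * b / of_real s))\<^sup>2 = s\<^sup>2 * (cmod a)\<^sup>2 + (cmod b)\<^sup>2 / s\<^sup>2 + 2 * Im (cnj a * b)"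
proof -
  have "of_real s * a - \<i> * b / of_real s = Complex (s*Re a + Im b / s) (s*Im a - Re b/s)"
    by (simp add: complex_eq_iff)
  then show ?thesis using assms unfolding cmod_power2
    by (simp add: power2_eq_square field_simps)
qed

lemma cmod_identity_plus:
  fixes a b :: complex and s :: real
  assumes "s > 0"
  shows "(cmod (of_real s * a + \<i> * b / of_real s))\<^sup>2 = s\<^sup>2 * (cmod a)\<^sup>2 + (cmod b)\<^sup>2 / s\<^sup>2 - 2 * Im (cnj a * b)"
proof -
  have "of_real s * a + \<i> * b / of_real s = Complex (s*Re a - Im b / s) (s*Im a + Re b/s)"
    by (simp add: complex_eq_iff)
  then show ?thesis using assms unfolding cmod_power2
    by (simp add: power2_eq_square field_simps)
qed

lemma tendsto_zero_bounded:
  fixes a b :: "'a \<Rightarrow> complex"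
  assumes "(a \<longlongrightarrow> 0) F" "\<And>x. cmod (b x) \<le> B"
  shows "((\<lambda>x. a x * b x) \<longlongrightarrow> 0) F"
proof (rule Lim_null_comparison)
  show "\<forall>\<^sub>F x in F. norm (a x * b x) \<le> cmod (a x) * B"
    using assms(2) by (intro always_eventually allI) (simp add: norm_mult mult_left_mono)
  show "((\<lambda>x. cmod (a x) * B) \<longlongrightarrow> 0) F"
    using tendsto_mult_left_zero[OF tendsto_norm_zero[OF assms(1)]] by simp
qed

lemma cis_deriv: "((\<lambda>x. cis (k * x)) has_vector_derivative (\<i> * of_real k * cis (k * x))) (at x)"
  unfolding has_vector_derivative_def
  by (auto intro!: derivative_eq_intros simp: scaleR_conv_of_real algebra_simps)



lemma deriv_lip:
  fixes v' w :: "real \<Rightarrow> complex"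
  assumes cont: "continuous_on UNIV v'" and lf: "locally_finite_set S"
    and der: "\<forall>t. t \<notin> S \<longrightarrow> (v' has_vector_derivative w t) (at t)"
    and xy: "x \<le> y" and bnd: "\<forall>t\<in>{x..y}. cmod (w t) \<le> M"
  shows "cmod (v' y - v' x) \<le> M * (y - x)"
proof -
  have M0: "0 \<le> M" using bnd xy by (meson atLeastAtMost_iff norm_ge_zero order.trans order_refl)
  have "(w has_integral (v' y - v' x)) {x..y}"
  proof (rule fundamental_theorem_of_calculus_interior_strong[OF lf_finite[OF lf, of x y] xy])
    show "continuous_on {x..y} v'" using continuous_on_subset[OF cont] by blast
    fix t assume "t \<in> {x<..<y} - S \<inter> {x..y}"
    then show "(v' has_vector_derivative w t) (at t)" using der by auto
  qed
  then have "((\<lambda>t. if t \<in> S then 0 else w t) has_integral (v' y - v' x)) {x..y}"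
    by (rule has_integral_spike_finite[OF lf_finite[OF lf, of x y], rotated]) auto
  then have "((\<lambda>t. if t \<in> S then 0 else w t) has_integral (v' y - v' x)) (cbox x y)"
    by (simp add: cbox_interval)
  moreover have "\<And>t. t \<in> cbox x y \<Longrightarrow> norm (if t \<in> S then 0 else w t) \<le> M"
    using bnd M0 by (simp add: cbox_interval)
  ultimately have "cmod (v' y - v' x) \<le> M * measure lborel (cbox x y)"
    by (rule has_integral_bound[OF M0])
  then show ?thesis using xy by simp
qed

lemma deriv_est:
  fixes v v' w :: "real \<Rightarrow> complex"
  assumes dv: "\<forall>t. (v has_vector_derivative v' t) (at t)"
    and cont: "continuous_on UNIV v'" and lf: "locally_finite_set S"
    and der: "\<forall>t. t \<notin> S \<longrightarrow> (v' has_vector_derivative w t) (at t)"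
    and xy: "x \<le> y" and bnd: "\<forall>t\<in>{x..y}. cmod (w t) \<le> M"
  shows "cmod (v y - v x - of_real (y - x) * v' x) \<le> M * (y - x) * (y - x)"
    and "cmod (v y - v x - of_real (y - x) * v' y) \<le> M * (y - x) * (y - x)"
proof -
  have M0: "0 \<le> M" using bnd xy by (meson atLeastAtMost_iff norm_ge_zero order.trans order_refl)
  have cv: "continuous_on UNIV v" using dv by (intro continuous_on_vector_derivative) (auto intro: has_vector_derivative_at_within)
  have I: "(v' has_integral (v y - v x)) {x..y}"
  proof (rule fundamental_theorem_of_calculus_interior_strong[of "{}" x y])
    show "continuous_on {x..y} v" using continuous_on_subset[OF cv] by blast
  qed (use xy dv in auto)
  have c: "((\<lambda>t. c) has_integral (of_real (y - x) * c)) {x..y}" for c :: complex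
    using has_integral_const_real[of c x y] xy by (simp add: scaleR_conv_of_real)
  have I1: "((\<lambda>t. v' t - v' x) has_integral (v y - v x - of_real (y - x) * v' x)) (cbox x y)"
    using has_integral_diff[OF I c] by simp
  have I2: "((\<lambda>t. v' t - v' y) has_integral (v y - v x - of_real (y - x) * v' y)) (cbox x y)"
    using has_integral_diff[OF I c] by simp
  have b1: "cmod (v' t - v' x) \<le> M * (y - x)" if "t \<in> cbox x y" for t
  proof -
    have "cmod (v' t - v' x) \<le> M * (t - x)"
      using that bnd by (intro deriv_lip[OF cont lf der]) auto
    also have "\<dots> \<le> M * (y - x)" using that M0 by (auto intro!: mult_left_mono)
    finally show ?thesis .
  qed
  have b2: "cmod (v' t - v' y) \<le> M * (y - x)" if "t \<in> cbox x y" for t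
  proof -
    have "cmod (v' y - v' t) \<le> M * (y - t)"
      using that bnd by (intro deriv_lip[OF cont lf der]) auto
    also have "\<dots> \<le> M * (y - x)" using that M0 by (auto intro!: mult_left_mono)
    finally show ?thesis by (simp add: norm_minus_commute)
  qed
  have "0 \<le> M * (y - x)" using M0 xy by simp
  then show "cmod (v y - v x - of_real (y - x) * v' x) \<le> M * (y - x) * (y - x)"
    using has_integral_bound[OF _ I1 b1] xy by simp
  show "cmod (v y - v x - of_real (y - x) * v' y) \<le> M * (y - x) * (y - x)"
    using has_integral_bound[OF _ I2 b2] \<open>0 \<le> M * (y - x)\<close> xy by simp
qed



lemma small_aux:
  fixes e d M a c :: real
  assumes e: "e > 0" and dd: "d = e / (2 * (\<bar>M\<bar> + 1))"
    and h: "d * a \<le> c1 + c2 + M * d * d" and c1: "c1 < e * d / 4" and c2: "c2 < e * d / 4"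
  shows "a < e"
proof -
  have d: "d > 0" using e dd by (simp add: add_pos_nonneg)
  have "M * d \<le> \<bar>M\<bar> * d" using d by (simp add: mult_right_mono)
  also have "\<bar>M\<bar> * d = e / 2 * (\<bar>M\<bar> / (\<bar>M\<bar> + 1))" unfolding dd by (simp add: field_simps)
  also have "\<dots> < e / 2" using e by (simp add: field_simps)
  finally have Md: "M * d < e / 2" .
  have "d * a < d * (e/2) + d * (M * d)" using h c1 c2 by (simp add: algebra_simps)
  then have "d * a < d * (e/2 + M * d)" by (simp add: algebra_simps)
  then have "a < e/2 + M * d" using d by (simp add: mult_less_cancel_left_pos)
  then show ?thesis using Md by simp
qed

lemma deriv_tendsto_bot:
  fixes v v' w :: "real \<Rightarrow> complex"
  assumes dv: "\<forall>t. (v has_vector_derivative v' t) (at t)"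
    and cont: "continuous_on UNIV v'" and lf: "locally_finite_set S"
    and der: "\<forall>t. t \<notin> S \<longrightarrow> (v' has_vector_derivative w t) (at t)"
    and bnd: "eventually (\<lambda>t. cmod (w t) \<le> M) at_bot"
    and lim: "(v \<longlongrightarrow> 0) at_bot"
  shows "(v' \<longlongrightarrow> 0) at_bot"
proof (rule tendstoI)
  fix e :: real assume e: "e > 0"
  obtain b where b: "\<forall>t\<le>b. cmod (w t) \<le> M" using bnd by (auto simp: eventually_at_bot_linorder)
  define d where "d = e / (2 * (\<bar>M\<bar> + 1))"
  have d: "d > 0" using e by (simp add: d_def add_pos_nonneg)
  have "e*d/4 > 0" using e d by simp
  from tendstoD[OF lim this] have "eventually (\<lambda>t. dist (v t) 0 < e*d/4) at_bot" .
  then obtain b2 where b2: "\<forall>t\<le>b2. cmod (v t) < e*d/4" by (auto simp: eventually_at_bot_linorder)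
  show "eventually (\<lambda>x. dist (v' x) 0 < e) at_bot"
    unfolding eventually_at_bot_linorder
  proof (intro exI[of _ "min b b2 - d"] allI impI)
    fix x assume x: "x \<le> min b b2 - d"
    have est: "cmod (v (x+d) - v x - of_real (x + d - x) * v' x) \<le> M*(x + d - x)*(x + d - x)"
      using b x d by (intro deriv_est(1)[OF dv cont lf der]) auto
    have eq: "of_real d * v' x = v (x+d) - v x - (v (x+d) - v x - of_real (x + d - x) * v' x)" by simp
    have "cmod (of_real d * v' x) \<le> cmod (v (x+d)) + cmod (v x) + M*d*d"
      unfolding eq using est by (smt (verit) norm_triangle_ineq4 norm_diff_ineq add_diff_cancel_left')
    then have "d * cmod (v' x) \<le> cmod (v (x+d)) + cmod (v x) + M*d*d"
      using d by (simp add: norm_mult)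
    moreover have "cmod (v (x+d)) < e*d/4" "cmod (v x) < e*d/4" using b2 x d by auto
    ultimately show "dist (v' x) 0 < e" using small_aux[OF e d_def] by simp
  qed
qed

lemma deriv_tendsto_top:
  fixes v v' w :: "real \<Rightarrow> complex"
  assumes dv: "\<forall>t. (v has_vector_derivative v' t) (at t)"
    and cont: "continuous_on UNIV v'" and lf: "locally_finite_set S"
    and der: "\<forall>t. t \<notin> S \<longrightarrow> (v' has_vector_derivative w t) (at t)"
    and bnd: "eventually (\<lambda>t. cmod (w t) \<le> M) at_top"
    and lim: "(v \<longlongrightarrow> 0) at_top"
  shows "(v' \<longlongrightarrow> 0) at_top"
proof (rule tendstoI)
  fix e :: real assume e: "e > 0"
  obtain b where b: "\<forall>t\<ge>b. cmod (w t) \<le> M" using bnd by (auto simp: eventually_at_top_linorder)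
  define d where "d = e / (2 * (\<bar>M\<bar> + 1))"
  have d: "d > 0" using e by (simp add: d_def add_pos_nonneg)
  have "e*d/4 > 0" using e d by simp
  from tendstoD[OF lim this] have "eventually (\<lambda>t. dist (v t) 0 < e*d/4) at_top" .
  then obtain b2 where b2: "\<forall>t\<ge>b2. cmod (v t) < e*d/4" by (auto simp: eventually_at_top_linorder)
  show "eventually (\<lambda>x. dist (v' x) 0 < e) at_top"
    unfolding eventually_at_top_linorder
  proof (intro exI[of _ "max b b2 + d"] allI impI)
    fix x assume x: "x \<ge> max b b2 + d"
    have est: "cmod (v x - v (x - d) - of_real (x - (x - d)) * v' x) \<le> M*(x - (x - d))*(x - (x - d))"
      using b x d by (intro deriv_est(2)[OF dv cont lf der]) auto
    have eq: "of_real d * v' x = v x - v (x - d) - (v x - v (x - d) - of_real (x - (x - d)) * v' x)" by simp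
    have "cmod (of_real d * v' x) \<le> cmod (v x) + cmod (v (x - d)) + M*d*d"
      unfolding eq using est by (smt (verit) norm_triangle_ineq4 norm_diff_ineq diff_diff_eq2 diff_self diff_zero)
    then have "d * cmod (v' x) \<le> cmod (v x) + cmod (v (x - d)) + M*d*d"
      using d by (simp add: norm_mult)
    moreover have "cmod (v (x - d)) < e*d/4" "cmod (v x) < e*d/4" using b2 x d by auto
    ultimately show "dist (v' x) 0 < e" using small_aux[OF e d_def] by simp
  qed
qed



lemma final_alg:
  fixes km c th :: real
  assumes km: "km > 0" and th: "th \<ge> 0"
    and cle: "2 * c \<le> 4 * km - 2 * c"
    and W: "4 * km - 2 * c + sqrt ((4 * km - 2 * c)\<^sup>2 - 4 * c\<^sup>2) \<le> 2 * c * exp (2 * th)"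
  shows "c / km \<ge> (sech th)\<^sup>2"
proof -
  define e where "e = exp th"
  have e1: "e \<ge> 1" using th by (simp add: e_def)
  have e2: "exp (2 * th) = e\<^sup>2" by (simp add: e_def power2_eq_square exp_add[symmetric])
  have ch: "cosh th = (e + 1/e) / 2" by (simp add: e_def cosh_def exp_minus field_simps)
  define s where "s = sqrt (km * (km - c))"
  have s0: "s \<ge> 0" using cle km by (simp add: s_def)
  have s2: "s\<^sup>2 = km * (km - c)" using cle km by (simp add: s_def)
  have "sqrt ((4 * km - 2 * c)\<^sup>2 - 4 * c\<^sup>2) = sqrt (4\<^sup>2 * (km * (km - c)))"
    by (rule arg_cong[where f=sqrt]) (simp add: power2_eq_square algebra_simps)
  also have "\<dots> = 4 * s" by (simp add: s_def real_sqrt_mult)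
  finally have W': "4 * km - 2 * c + 4 * s \<le> 2 * c * e\<^sup>2" using W e2 by simp
  have cpos: "c > 0"
  proof (rule ccontr)
    assume "\<not> c > 0"
    then have "c \<le> 0" by simp
    moreover have "2 * c * e\<^sup>2 \<le> 0" using \<open>c \<le> 0\<close> by (simp add: mult_nonpos_nonneg)
    ultimately show False using W' s0 km by linarith
  qed
  have A: "0 \<le> 4 * s" using s0 by simp
  have B: "4 * s \<le> 2 * c * (e\<^sup>2 + 1) - 4 * km" using W' by (simp add: algebra_simps)
  have "(4 * s)\<^sup>2 \<le> (2 * c * (e\<^sup>2 + 1) - 4 * km)\<^sup>2"
    by (rule power_mono[OF B A])
  then have "16 * (km * (km - c)) \<le> (2 * c * (e\<^sup>2 + 1) - 4 * km)\<^sup>2"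
    using s2 by (simp add: power_mult_distrib)
  then have "16 * km * c * e\<^sup>2 \<le> 4 * c\<^sup>2 * (e\<^sup>2 + 1)\<^sup>2"
    by (simp add: power2_eq_square algebra_simps)
  then have "(4 * c) * (4 * km * e\<^sup>2) \<le> (4 * c) * (c * (e\<^sup>2 + 1)\<^sup>2)"
    by (simp add: power2_eq_square algebra_simps)
  then have key: "4 * km * e\<^sup>2 \<le> c * (e\<^sup>2 + 1)\<^sup>2"
    using cpos by (simp add: mult_le_cancel_left_pos)
  have "(sech th)\<^sup>2 = 4 * e\<^sup>2 / (e\<^sup>2 + 1)\<^sup>2"
    using e1 by (simp add: sech_def ch power2_eq_square field_simps)
  also have "\<dots> \<le> c / km"
  proof -
    have p: "(e\<^sup>2 + 1)\<^sup>2 > 0" by (simp add: add_nonneg_pos power2_eq_square)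
    have "4 * e\<^sup>2 / (e\<^sup>2 + 1)\<^sup>2 \<le> c / km \<longleftrightarrow> 4 * e\<^sup>2 * km \<le> c * (e\<^sup>2 + 1)\<^sup>2"
      using p km by (simp add: divide_le_eq le_divide_eq mult.commute mult.left_commute)
    then show ?thesis using key by (simp add: mult.commute mult.left_commute)
  qed
  finally show ?thesis .
qed


lemma eps_lemma:
  fixes A c K :: real
  assumes A: "2 * c \<le> A" and c: "0 \<le> c"
    and H: "\<And>e. e > 0 \<Longrightarrow> ln (A + e + sqrt ((A + e)\<^sup>2 - 4 * c\<^sup>2)) \<le> ln (2 * c + e + sqrt ((2 * c + e)\<^sup>2 - 4 * c\<^sup>2)) + K"
  shows "A + sqrt (A\<^sup>2 - 4 * c\<^sup>2) \<le> 2 * c * exp K"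
proof -
  define R where "R e = (2 * c + e + sqrt ((2 * c + e)\<^sup>2 - 4 * c\<^sup>2)) * exp K" for e
  have le: "A + sqrt (A\<^sup>2 - 4 * c\<^sup>2) \<le> R e" if e: "e > 0" for e
  proof -
    have A0: "A \<ge> 0" using A c by simp
    have "A\<^sup>2 - 4 * c\<^sup>2 \<le> (A + e)\<^sup>2 - 4 * c\<^sup>2" using A0 e by (simp add: power_mono)
    then have "sqrt (A\<^sup>2 - 4 * c\<^sup>2) \<le> sqrt ((A + e)\<^sup>2 - 4 * c\<^sup>2)" by (rule real_sqrt_le_mono)
    then have "A + sqrt (A\<^sup>2 - 4 * c\<^sup>2) \<le> A + e + sqrt ((A + e)\<^sup>2 - 4 * c\<^sup>2)" using e by linarith
    also have "\<dots> = exp (ln (A + e + sqrt ((A + e)\<^sup>2 - 4 * c\<^sup>2)))"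
    proof -
      have "(2*c)\<^sup>2 \<le> (A+e)\<^sup>2" using A c e by (intro power_mono) auto
      then have "(A + e)\<^sup>2 - 4 * c\<^sup>2 \<ge> 0" by (simp add: power_mult_distrib)
      then have "sqrt ((A + e)\<^sup>2 - 4 * c\<^sup>2) \<ge> 0" by (rule real_sqrt_ge_zero)
      then have "A + e + sqrt ((A + e)\<^sup>2 - 4 * c\<^sup>2) > 0" using A0 e by linarith
      then show ?thesis by (rule exp_ln[symmetric])
    qed
    also have "\<dots> \<le> exp (ln (2 * c + e + sqrt ((2 * c + e)\<^sup>2 - 4 * c\<^sup>2)) + K)" using H[OF e] by simp
    also have "\<dots> = R e"
    proof -
      have "(2*c)\<^sup>2 \<le> (2*c+e)\<^sup>2" using c e by (intro power_mono) auto
      then have "(2*c + e)\<^sup>2 - 4 * c\<^sup>2 \<ge> 0" by (simp add: power_mult_distrib)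
      then have "sqrt ((2*c + e)\<^sup>2 - 4 * c\<^sup>2) \<ge> 0" by (rule real_sqrt_ge_zero)
      then have "2*c + e + sqrt ((2*c + e)\<^sup>2 - 4 * c\<^sup>2) > 0" using c e by linarith
      then show ?thesis by (simp add: R_def exp_add)
    qed
    finally show ?thesis .
  qed
  have "(R \<longlongrightarrow> R 0) (at_right 0)"
    unfolding R_def by (intro tendsto_intros continuous_on_tendsto_compose) auto
  moreover have "R 0 = 2 * c * exp K" by (simp add: R_def power_mult_distrib)
  ultimately have "(R \<longlongrightarrow> 2 * c * exp K) (at_right 0)" by simp
  then show ?thesis
    by (rule tendsto_lowerbound) (auto simp: eventually_at_right_less le eventually_at_right_field intro!: exI[of _ 1])
qed

lemma E_deriv_bound:
  fixes h hd k p q p1 q1 :: real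
  assumes h: "h > 0"
  shows "\<bar>hd * (p\<^sup>2 + q\<^sup>2) + h * (2 * p * p1 + 2 * q * q1) - 2 * k * (p * p1 + q * q1) / h - hd * (p1\<^sup>2 + q1\<^sup>2) / h\<^sup>2\<bar>
    \<le> (\<bar>hd\<bar> + \<bar>h\<^sup>2 - k\<bar>) / h * sqrt ((h * (p\<^sup>2 + q\<^sup>2) + (p1\<^sup>2 + q1\<^sup>2) / h)\<^sup>2 - 4 * (p * q1 - q * p1)\<^sup>2)"
proof -
  define X where "X = h * (p\<^sup>2 + q\<^sup>2) - (p1\<^sup>2 + q1\<^sup>2) / h"
  define Y where "Y = 2 * (p * p1 + q * q1)"
  have id1: "hd * (p\<^sup>2 + q\<^sup>2) + h * (2 * p * p1 + 2 * q * q1) - 2 * k * (p * p1 + q * q1) / h - hd * (p1\<^sup>2 + q1\<^sup>2) / h\<^sup>2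
     = (hd / h) * X + ((h\<^sup>2 - k) / h) * Y"
    using h by (simp add: X_def Y_def field_simps power2_eq_square)
  have id2: "(h * (p\<^sup>2 + q\<^sup>2) + (p1\<^sup>2 + q1\<^sup>2) / h)\<^sup>2 - 4 * (p * q1 - q * p1)\<^sup>2 = X\<^sup>2 + Y\<^sup>2"
    using h by (simp add: X_def Y_def field_simps power2_eq_square)
  have bx: "\<bar>X\<bar> \<le> sqrt (X\<^sup>2 + Y\<^sup>2)" by (simp add: real_le_rsqrt)
  have by': "\<bar>Y\<bar> \<le> sqrt (X\<^sup>2 + Y\<^sup>2)" by (simp add: real_le_rsqrt)
  have "\<bar>(hd / h) * X + ((h\<^sup>2 - k) / h) * Y\<bar> \<le> \<bar>hd / h\<bar> * \<bar>X\<bar> + \<bar>(h\<^sup>2 - k) / h\<bar> * \<bar>Y\<bar>"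
    using abs_triangle_ineq[of "(hd / h) * X" "((h\<^sup>2 - k) / h) * Y"] by (simp only: abs_mult)
  also have "\<dots> \<le> \<bar>hd / h\<bar> * sqrt (X\<^sup>2 + Y\<^sup>2) + \<bar>(h\<^sup>2 - k) / h\<bar> * sqrt (X\<^sup>2 + Y\<^sup>2)"
    by (intro add_mono mult_left_mono bx by') auto
  also have "\<dots> = (\<bar>hd\<bar> + \<bar>h\<^sup>2 - k\<bar>) / h * sqrt (X\<^sup>2 + Y\<^sup>2)"
    using h by (simp add: field_simps)
  finally show ?thesis unfolding id1 id2 .
qed


lemma g_deriv:
  fixes F :: "real \<Rightarrow> real"
  assumes dF: "(F has_real_derivative Fd) (at x)" and Fx: "F x > 2 * \<bar>c\<bar>"
  shows "((\<lambda>t. ln (F t + sqrt ((F t)\<^sup>2 - 4 * c\<^sup>2))) has_real_derivative Fd / sqrt ((F x)\<^sup>2 - 4 * c\<^sup>2)) (at x)"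
proof -
  have "(2 * \<bar>c\<bar>)\<^sup>2 < (F x)\<^sup>2" using Fx by (intro power_strict_mono) auto
  then have R: "(F x)\<^sup>2 - 4 * c\<^sup>2 > 0" by (simp add: power_mult_distrib)
  then have sR: "sqrt ((F x)\<^sup>2 - 4 * c\<^sup>2) > 0" by simp
  have Fp: "F x > 0" using Fx by (smt (verit) abs_ge_zero)
  have pos: "F x + sqrt ((F x)\<^sup>2 - 4 * c\<^sup>2) > 0" using Fp sR by linarith
  define s where "s = sqrt ((F x)\<^sup>2 - 4 * c\<^sup>2)"
  have d1: "((\<lambda>t. (F t)\<^sup>2 - 4 * c\<^sup>2) has_real_derivative 2 * F x * Fd) (at x)"
    using dF by (auto intro!: derivative_eq_intros)
  have d2: "((\<lambda>t. sqrt ((F t)\<^sup>2 - 4 * c\<^sup>2)) has_real_derivative (inverse (sqrt ((F x)\<^sup>2 - 4 * c\<^sup>2)) / 2) * (2 * F x * Fd)) (at x)"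
    by (rule DERIV_chain2[OF DERIV_real_sqrt[OF R] d1])
  have d3: "((\<lambda>t. F t + sqrt ((F t)\<^sup>2 - 4 * c\<^sup>2)) has_real_derivative Fd + (inverse (sqrt ((F x)\<^sup>2 - 4 * c\<^sup>2)) / 2) * (2 * F x * Fd)) (at x)"
    by (rule DERIV_add[OF dF d2])
  have d4: "((\<lambda>t. ln (F t + sqrt ((F t)\<^sup>2 - 4 * c\<^sup>2))) has_real_derivative inverse (F x + sqrt ((F x)\<^sup>2 - 4 * c\<^sup>2)) * (Fd + (inverse (sqrt ((F x)\<^sup>2 - 4 * c\<^sup>2)) / 2) * (2 * F x * Fd))) (at x)"
    by (rule DERIV_chain2[OF DERIV_ln[OF pos] d3])
  have eq: "inverse (F x + s) * (Fd + (inverse s / 2) * (2 * F x * Fd)) = Fd / s"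
  proof -
    have s0: "s > 0" using sR unfolding s_def .
    have "Fd + (inverse s / 2) * (2 * F x * Fd) = Fd * (F x + s) / s" using s0 by (simp add: field_simps)
    moreover have "F x + s \<noteq> 0" using pos unfolding s_def by simp
    ultimately show ?thesis using s0 by (simp add: divide_simps)
  qed
  show ?thesis using d4 eq unfolding s_def by simp
qed

lemma Z_limit:
  fixes h :: "'a \<Rightarrow> real" and u u' \<psi> \<psi>' :: "'a \<Rightarrow> complex"
  assumes hl: "(h \<longlongrightarrow> k) F" and k: "k > 0" and hp: "\<forall>x. h x > 0"
    and l1: "((\<lambda>x. u x - \<psi> x) \<longlongrightarrow> 0) F" and l2: "((\<lambda>x. u' x - \<psi>' x) \<longlongrightarrow> 0) F"
    and b1: "\<And>x. cmod (\<psi> x) \<le> B1" and b2: "\<And>x. cmod (\<psi>' x) \<le> B2"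
  shows "((\<lambda>x. (of_real (sqrt (h x)) * u x - \<i> * u' x / of_real (sqrt (h x)))
            - (of_real (sqrt k) * \<psi> x - \<i> * \<psi>' x / of_real (sqrt k))) \<longlongrightarrow> 0) F"
    and "((\<lambda>x. (of_real (sqrt (h x)) * u x + \<i> * u' x / of_real (sqrt (h x)))
            - (of_real (sqrt k) * \<psi> x + \<i> * \<psi>' x / of_real (sqrt k))) \<longlongrightarrow> 0) F"
proof -
  have sk: "sqrt k > 0" using k by simp
  have s1: "((\<lambda>x. of_real (sqrt (h x))) \<longlongrightarrow> (of_real (sqrt k) :: complex)) F"
    by (intro tendsto_intros hl)
  have s2: "((\<lambda>x. of_real (1 / sqrt (h x))) \<longlongrightarrow> (of_real (1 / sqrt k) :: complex)) F"
    using sk by (intro tendsto_intros hl) auto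
  have t1: "((\<lambda>x. of_real (sqrt (h x)) * (u x - \<psi> x)) \<longlongrightarrow> 0) F"
    using tendsto_mult[OF s1 l1] by simp
  have t2: "((\<lambda>x. of_real (sqrt (h x) - sqrt k) * \<psi> x) \<longlongrightarrow> 0) F"
  proof (rule tendsto_zero_bounded[OF _ b1])
    show "((\<lambda>x. complex_of_real (sqrt (h x) - sqrt k)) \<longlongrightarrow> 0) F"
      using tendsto_diff[OF s1 tendsto_const[of "of_real (sqrt k)"]] by simp
  qed
  have t3: "((\<lambda>x. (u' x - \<psi>' x) * of_real (1 / sqrt (h x))) \<longlongrightarrow> 0) F"
    using tendsto_mult[OF l2 s2] by simp
  have t4: "((\<lambda>x. of_real (1 / sqrt (h x) - 1 / sqrt k) * \<psi>' x) \<longlongrightarrow> 0) F"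
  proof (rule tendsto_zero_bounded[OF _ b2])
    show "((\<lambda>x. complex_of_real (1 / sqrt (h x) - 1 / sqrt k)) \<longlongrightarrow> 0) F"
      using tendsto_diff[OF s2 tendsto_const[of "of_real (1 / sqrt k)"]] by simp
  qed
  have eq1: "(of_real (sqrt (h x)) * u x - \<i> * u' x / of_real (sqrt (h x)))
            - (of_real (sqrt k) * \<psi> x - \<i> * \<psi>' x / of_real (sqrt k))
     = of_real (sqrt (h x)) * (u x - \<psi> x) + of_real (sqrt (h x) - sqrt k) * \<psi> x
       - \<i> * ((u' x - \<psi>' x) * of_real (1 / sqrt (h x))) - \<i> * (of_real (1 / sqrt (h x) - 1 / sqrt k) * \<psi>' x)" for x
    by (simp add: algebra_simps divide_inverse of_real_inverse)
  have eq2: "(of_real (sqrt (h x)) * u x + \<i> * u' x / of_real (sqrt (h x)))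
            - (of_real (sqrt k) * \<psi> x + \<i> * \<psi>' x / of_real (sqrt k))
     = of_real (sqrt (h x)) * (u x - \<psi> x) + of_real (sqrt (h x) - sqrt k) * \<psi> x
       + \<i> * ((u' x - \<psi>' x) * of_real (1 / sqrt (h x))) + \<i> * (of_real (1 / sqrt (h x) - 1 / sqrt k) * \<psi>' x)" for x
    by (simp add: algebra_simps divide_inverse of_real_inverse)
  show "((\<lambda>x. (of_real (sqrt (h x)) * u x - \<i> * u' x / of_real (sqrt (h x)))
            - (of_real (sqrt k) * \<psi> x - \<i> * \<psi>' x / of_real (sqrt k))) \<longlongrightarrow> 0) F"
    unfolding eq1 by (rule tendsto_eq_rhs[OF tendsto_diff[OF tendsto_diff[OF tendsto_add[OF t1 t2] tendsto_mult_left[OF t3]] tendsto_mult_left[OF t4]]]) simp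
  show "((\<lambda>x. (of_real (sqrt (h x)) * u x + \<i> * u' x / of_real (sqrt (h x)))
            - (of_real (sqrt k) * \<psi> x + \<i> * \<psi>' x / of_real (sqrt k))) \<longlongrightarrow> 0) F"
    unfolding eq2 by (rule tendsto_eq_rhs[OF tendsto_add[OF tendsto_add[OF tendsto_add[OF t1 t2] tendsto_mult_left[OF t3]] tendsto_mult_left[OF t4]]]) simp
qed

lemma norm_sq_limit:
  fixes Z Z0 :: "'a \<Rightarrow> complex"
  assumes l: "((\<lambda>x. Z x - Z0 x) \<longlongrightarrow> 0) F" and n: "\<And>x. cmod (Z0 x) = C"
  shows "((\<lambda>x. (cmod (Z x))\<^sup>2) \<longlongrightarrow> C\<^sup>2) F"
proof -
  have "((\<lambda>x. cmod (Z x) - C) \<longlongrightarrow> 0) F"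
  proof (rule Lim_null_comparison)
    show "\<forall>\<^sub>F x in F. norm (cmod (Z x) - C) \<le> cmod (Z x - Z0 x)"
      by (intro always_eventually allI) (metis n norm_triangle_ineq3 real_norm_def)
    show "((\<lambda>x. cmod (Z x - Z0 x)) \<longlongrightarrow> 0) F" using tendsto_norm_zero[OF l] .
  qed
  then have "((\<lambda>x. (cmod (Z x) - C) + C) \<longlongrightarrow> 0 + C) F" by (intro tendsto_intros)
  then have "((\<lambda>x. cmod (Z x)) \<longlongrightarrow> C) F" by simp
  then show ?thesis by (intro tendsto_intros)
qed



lemma cis_lin_deriv:
  fixes a :: complex
  shows "((\<lambda>x. a * cis (k * x)) has_vector_derivative (\<i> * of_real k * a * cis (k * x))) (at x)"
  by (rule has_vector_derivative_eq_rhs[OF has_vector_derivative_mult_right[OF cis_deriv[of k x], where a=a]]) (simp add: algebra_simps)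

lemma eventually_w_bound:
  fixes k2 :: "real \<Rightarrow> real" and u \<psi> :: "real \<Rightarrow> complex"
  assumes k: "(k2 \<longlongrightarrow> K) F" and u: "((\<lambda>x. u x - \<psi> x) \<longlongrightarrow> 0) F"
    and b: "\<And>x. cmod (\<psi> x) \<le> B"
  shows "eventually (\<lambda>x. cmod (- (of_real (k2 x) * u x) - - (of_real K * \<psi> x)) \<le> (\<bar>K\<bar> + 1) * (1 + B) + \<bar>K\<bar> * B) F"
proof -
  have "eventually (\<lambda>x. dist (k2 x) K < 1) F" using tendstoD[OF k] by simp
  moreover have "eventually (\<lambda>x. dist (u x - \<psi> x) 0 < 1) F" using tendstoD[OF u] by simp
  ultimately show ?thesis
  proof eventually_elim
    case (elim x)
    have k2b: "\<bar>k2 x\<bar> \<le> \<bar>K\<bar> + 1" using elim(1) by (simp add: dist_real_def)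
    have ub: "cmod (u x) \<le> 1 + B"
      using elim(2) b[of x] norm_triangle_ineq[of "u x - \<psi> x" "\<psi> x"] by simp
    have "cmod (- (of_real (k2 x) * u x) - - (of_real K * \<psi> x)) \<le> cmod (of_real (k2 x) * u x) + cmod (of_real K * \<psi> x)"
      by (metis add_uminus_conv_diff minus_minus norm_minus_cancel norm_triangle_ineq4)
    also have "\<dots> = \<bar>k2 x\<bar> * cmod (u x) + \<bar>K\<bar> * cmod (\<psi> x)" by (simp add: norm_mult)
    also have "\<dots> \<le> (\<bar>K\<bar> + 1) * (1 + B) + \<bar>K\<bar> * B"
      using k2b ub b[of x] by (intro add_mono mult_mono) auto
    finally show ?case .
  qed
qed

lemma asym_bot:
  fixes u u' :: "real \<Rightarrow> complex" and k2 :: "real \<Rightarrow> real"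
  assumes lf: "locally_finite_set S"
    and du: "\<forall>x. (u has_vector_derivative u' x) (at x)" and cu': "continuous_on UNIV u'"
    and d2: "\<forall>x. x \<notin> S \<longrightarrow> (u' has_vector_derivative (- (complex_of_real (k2 x) * u x))) (at x)"
    and k2_bot: "(k2 \<longlongrightarrow> km\<^sup>2) at_bot"
    and u_bot: "((\<lambda>x. u x - (cis (km * x) + r * cis (- km * x))) \<longlongrightarrow> 0) at_bot"
  shows "((\<lambda>x. u' x - (\<i> * of_real km * cis (km * x) + \<i> * of_real (- km) * r * cis (- km * x))) \<longlongrightarrow> 0) at_bot"
proof -
  define \<psi> where "\<psi> x = cis (km * x) + r * cis (- km * x)" for x
  define \<psi>' where "\<psi>' x = \<i> * of_real km * cis (km * x) + \<i> * of_real (- km) * r * cis (- km * x)" for x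
  have d\<psi>: "(\<psi> has_vector_derivative \<psi>' x) (at x)" for x
    unfolding \<psi>_def \<psi>'_def using has_vector_derivative_add[OF cis_lin_deriv[of 1 km x] cis_lin_deriv[of r "-km" x]]
    by simp
  have d\<psi>': "(\<psi>' has_vector_derivative (- (of_real (km\<^sup>2) * \<psi> x))) (at x)" for x
    unfolding \<psi>_def \<psi>'_def
    by (rule has_vector_derivative_eq_rhs[OF has_vector_derivative_add[OF cis_lin_deriv[of "\<i> * of_real km" km x] cis_lin_deriv[of "\<i> * of_real (- km) * r" "-km" x]]])
       (simp add: algebra_simps power2_eq_square)
  have b: "cmod (\<psi> x) \<le> 1 + cmod r" for x
    unfolding \<psi>_def using norm_triangle_ineq[of "cis (km * x)" "r * cis (- km * x)"] by (simp add: norm_mult)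
  have c\<psi>': "continuous_on UNIV \<psi>'"
    using d\<psi>' by (intro continuous_on_vector_derivative) (auto intro: has_vector_derivative_at_within)
  show ?thesis
    unfolding \<psi>'_def[symmetric]
  proof (rule deriv_tendsto_bot[OF _ _ lf])
    show "\<forall>t. ((\<lambda>x. u x - \<psi> x) has_vector_derivative u' t - \<psi>' t) (at t)"
      using du d\<psi> by (auto intro: has_vector_derivative_diff)
    show "continuous_on UNIV (\<lambda>x. u' x - \<psi>' x)" by (intro continuous_intros cu' c\<psi>')
    show "\<forall>t. t \<notin> S \<longrightarrow> ((\<lambda>x. u' x - \<psi>' x) has_vector_derivative
            (- (of_real (k2 t) * u t) - - (of_real (km\<^sup>2) * \<psi> t))) (at t)"
      by (intro allI impI has_vector_derivative_diff[OF d2[rule_format] d\<psi>'])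
    show "((\<lambda>x. u x - \<psi> x) \<longlongrightarrow> 0) at_bot" using u_bot unfolding \<psi>_def .
    show "eventually (\<lambda>t. cmod (- (of_real (k2 t) * u t) - - (of_real (km\<^sup>2) * \<psi> t)) \<le> (\<bar>km\<^sup>2\<bar> + 1) * (1 + (1 + cmod r)) + \<bar>km\<^sup>2\<bar> * (1 + cmod r)) at_bot"
      by (rule eventually_w_bound[OF k2_bot _ b]) (use u_bot in \<open>simp add: \<psi>_def\<close>)
  qed
qed

lemma asym_top:
  fixes u u' :: "real \<Rightarrow> complex" and k2 :: "real \<Rightarrow> real"
  assumes lf: "locally_finite_set S"
    and du: "\<forall>x. (u has_vector_derivative u' x) (at x)" and cu': "continuous_on UNIV u'"
    and d2: "\<forall>x. x \<notin> S \<longrightarrow> (u' has_vector_derivative (- (complex_of_real (k2 x) * u x))) (at x)"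
    and k2_top: "(k2 \<longlongrightarrow> kp\<^sup>2) at_top"
    and u_top: "((\<lambda>x. u x - \<tau> * cis (kp * x)) \<longlongrightarrow> 0) at_top"
  shows "((\<lambda>x. u' x - \<i> * of_real kp * \<tau> * cis (kp * x)) \<longlongrightarrow> 0) at_top"
proof -
  define \<psi> where "\<psi> x = \<tau> * cis (kp * x)" for x
  define \<psi>' where "\<psi>' x = \<i> * of_real kp * \<tau> * cis (kp * x)" for x
  have d\<psi>: "(\<psi> has_vector_derivative \<psi>' x) (at x)" for x
    unfolding \<psi>_def \<psi>'_def using cis_lin_deriv[of \<tau> kp x] by simp
  have d\<psi>': "(\<psi>' has_vector_derivative (- (of_real (kp\<^sup>2) * \<psi> x))) (at x)" for x
    unfolding \<psi>_def \<psi>'_def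
    by (rule has_vector_derivative_eq_rhs[OF cis_lin_deriv[of "\<i> * of_real kp * \<tau>" kp x]])
       (simp add: algebra_simps power2_eq_square)
  have b: "cmod (\<psi> x) \<le> cmod \<tau>" for x
    unfolding \<psi>_def by (simp add: norm_mult)
  have c\<psi>': "continuous_on UNIV \<psi>'"
    using d\<psi>' by (intro continuous_on_vector_derivative) (auto intro: has_vector_derivative_at_within)
  show ?thesis
    unfolding \<psi>'_def[symmetric]
  proof (rule deriv_tendsto_top[OF _ _ lf])
    show "\<forall>t. ((\<lambda>x. u x - \<psi> x) has_vector_derivative u' t - \<psi>' t) (at t)"
      using du d\<psi> by (auto intro: has_vector_derivative_diff)
    show "continuous_on UNIV (\<lambda>x. u' x - \<psi>' x)" by (intro continuous_intros cu' c\<psi>')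
    show "\<forall>t. t \<notin> S \<longrightarrow> ((\<lambda>x. u' x - \<psi>' x) has_vector_derivative
            (- (of_real (k2 t) * u t) - - (of_real (kp\<^sup>2) * \<psi> t))) (at t)"
      by (intro allI impI has_vector_derivative_diff[OF d2[rule_format] d\<psi>'])
    show "((\<lambda>x. u x - \<psi> x) \<longlongrightarrow> 0) at_top" using u_top unfolding \<psi>_def .
    show "eventually (\<lambda>t. cmod (- (of_real (k2 t) * u t) - - (of_real (kp\<^sup>2) * \<psi> t)) \<le> (\<bar>kp\<^sup>2\<bar> + 1) * (1 + cmod \<tau>) + \<bar>kp\<^sup>2\<bar> * cmod \<tau>) at_top"
      by (rule eventually_w_bound[OF k2_top _ b]) (use u_top in \<open>simp add: \<psi>_def\<close>)
  qed
qed


lemma J_const: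
  fixes u u' :: "real \<Rightarrow> complex" and k2 :: "real \<Rightarrow> real"
  assumes lf: "locally_finite_set S"
    and du: "\<forall>x. (u has_vector_derivative u' x) (at x)" and cu': "continuous_on UNIV u'"
    and d2: "\<forall>x. x \<notin> S \<longrightarrow> (u' has_vector_derivative (- (complex_of_real (k2 x) * u x))) (at x)"
  shows "\<exists>c. \<forall>x. Im (cnj (u x) * u' x) = c"
proof -
  define J where "J x = Im (cnj (u x) * u' x)" for x
  have cu: "continuous_on UNIV u"
    using du by (intro continuous_on_vector_derivative) (auto intro: has_vector_derivative_at_within)
  have cJ: "continuous_on UNIV J" unfolding J_def by (intro continuous_intros cu cu')
  have dJ: "(J has_derivative (\<lambda>h. 0)) (at x)" if x: "x \<notin> S" for x
  proof -
    have 1: "((\<lambda>x. cnj (u x)) has_vector_derivative cnj (u' x)) (at x)"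
      by (rule bounded_linear.has_vector_derivative[OF bounded_linear_cnj du[rule_format]])
    have 2: "((\<lambda>x. cnj (u x) * u' x) has_vector_derivative (cnj (u x) * (- (of_real (k2 x) * u x)) + cnj (u' x) * u' x)) (at x)"
      by (rule has_vector_derivative_mult[OF 1 d2[rule_format, OF x]])
    have 3: "(J has_vector_derivative Im (cnj (u x) * (- (of_real (k2 x) * u x)) + cnj (u' x) * u' x)) (at x)"
      unfolding J_def by (rule bounded_linear.has_vector_derivative[OF bounded_linear_Im 2])
    have 4: "Im (cnj (u x) * (- (of_real (k2 x) * u x)) + cnj (u' x) * u' x) = 0"
      by (simp add: algebra_simps)
    show ?thesis using 3 unfolding 4 has_vector_derivative_def by simp
  qed
  have eqa: "J z = J (min 0 x)" if zz: "z \<in> {min 0 x .. max 0 x}" for x z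
  proof -
    have fin: "finite (S \<inter> {min 0 x..max 0 x})" by (rule lf_finite[OF lf])
    have co: "continuous_on {min 0 x..max 0 x} J" using continuous_on_subset[OF cJ] by blast
    have fd: "\<And>y. y \<in> {min 0 x..max 0 x} - S \<inter> {min 0 x..max 0 x} \<Longrightarrow> (J has_derivative (\<lambda>h. 0)) (at y within {min 0 x..max 0 x})"
      using dJ has_derivative_at_withinI by blast
    show ?thesis using has_derivative_zero_unique_strong_interval[OF fin co refl fd zz] .
  qed
  have "J x = J 0" for x using eqa[of x x] eqa[of 0 x] by auto
  then show ?thesis unfolding J_def by blast
qed


definition EE :: "(real \<Rightarrow> real) \<Rightarrow> (real \<Rightarrow> complex) \<Rightarrow> (real \<Rightarrow> complex) \<Rightarrow> real \<Rightarrow> real" where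
  "EE h u u' t = h t * (cmod (u t))\<^sup>2 + (cmod (u' t))\<^sup>2 / h t"

lemma EE_Z:
  assumes "h t > 0"
  shows "(cmod (of_real (sqrt (h t)) * u t - \<i> * u' t / of_real (sqrt (h t))))\<^sup>2 = EE h u u' t + 2 * Im (cnj (u t) * u' t)"
    and "(cmod (of_real (sqrt (h t)) * u t + \<i> * u' t / of_real (sqrt (h t))))\<^sup>2 = EE h u u' t - 2 * Im (cnj (u t) * u' t)"
  using assms cmod_identity_minus[of "sqrt (h t)" "u t" "u' t"] cmod_identity_plus[of "sqrt (h t)" "u t" "u' t"]
  by (simp_all add: EE_def)

lemma EE_ge:
  assumes "h t > 0"
  shows "EE h u u' t \<ge> 2 * \<bar>Im (cnj (u t) * u' t)\<bar>"
  using EE_Z[of h t u u', OF assms] by (smt (verit) zero_le_power2)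

lemma comparison:
  fixes u u' :: "real \<Rightarrow> complex" and k2 h h' :: "real \<Rightarrow> real"
  assumes lf: "locally_finite_set S"
    and du: "\<forall>x. (u has_vector_derivative u' x) (at x)" and cu': "continuous_on UNIV u'"
    and d2: "\<forall>x. x \<notin> S \<longrightarrow> (u' has_vector_derivative (- (complex_of_real (k2 x) * u x))) (at x)"
    and dh: "\<forall>x. (h has_real_derivative h' x) (at x)"
    and hp: "\<forall>x. h x > 0"
    and Jc: "\<forall>x. Im (cnj (u x) * u' x) = c"
    and sig: "\<forall>x. \<sigma> * h' x = \<bar>h' x\<bar>"
    and eps: "\<epsilon> > 0" and xy: "x \<le> y"
    and fint: "(\<lambda>t. \<bar>k2 t - (h t)\<^sup>2\<bar> / h t) integrable_on {x..y}"
  shows "ln (EE h u u' x + \<epsilon> + sqrt ((EE h u u' x + \<epsilon>)\<^sup>2 - 4 * c\<^sup>2))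
     \<le> ln (EE h u u' y + \<epsilon> + sqrt ((EE h u u' y + \<epsilon>)\<^sup>2 - 4 * c\<^sup>2)) + \<sigma> * (ln (h y) - ln (h x))
        + integral {x..y} (\<lambda>t. \<bar>k2 t - (h t)\<^sup>2\<bar> / h t)"
proof -
  define f where "f t = \<bar>k2 t - (h t)\<^sup>2\<bar> / h t" for t
  define E where "E = EE h u u'"
  define p where "p t = Re (u t)" for t
  define q where "q t = Im (u t)" for t
  define p1 where "p1 t = Re (u' t)" for t
  define q1 where "q1 t = Im (u' t)" for t
  have Eeq: "E = (\<lambda>t. h t * ((p t)\<^sup>2 + (q t)\<^sup>2) + ((p1 t)\<^sup>2 + (q1 t)\<^sup>2) / h t)"
    by (simp add: fun_eq_iff E_def EE_def cmod_power2 p_def q_def p1_def q1_def)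
  have Jeq: "c = p t * q1 t - q t * p1 t" for t
    using Jc[rule_format, of t] by (simp add: p_def q_def p1_def q1_def)
  have Ege: "E t \<ge> 2 * \<bar>c\<bar>" for t using EE_ge[of h t u u'] hp Jc by (simp add: E_def)
  have dp: "(p has_real_derivative p1 t) (at t)" for t
    unfolding has_real_derivative_iff_has_vector_derivative p_def p1_def
    by (rule bounded_linear.has_vector_derivative[OF bounded_linear_Re du[rule_format]])
  have dq: "(q has_real_derivative q1 t) (at t)" for t
    unfolding has_real_derivative_iff_has_vector_derivative q_def q1_def
    by (rule bounded_linear.has_vector_derivative[OF bounded_linear_Im du[rule_format]])
  have dp1: "(p1 has_real_derivative - k2 t * p t) (at t)" if "t \<notin> S" for t
    using bounded_linear.has_vector_derivative[OF bounded_linear_Re d2[rule_format, OF that]]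
    unfolding has_real_derivative_iff_has_vector_derivative p_def p1_def by simp
  have dq1: "(q1 has_real_derivative - k2 t * q t) (at t)" if "t \<notin> S" for t
    using bounded_linear.has_vector_derivative[OF bounded_linear_Im d2[rule_format, OF that]]
    unfolding has_real_derivative_iff_has_vector_derivative q_def q1_def by simp
  define Ed where "Ed t = h' t * ((p t)\<^sup>2 + (q t)\<^sup>2) + h t * (2 * p t * p1 t + 2 * q t * q1 t)
      - 2 * k2 t * (p t * p1 t + q t * q1 t) / h t - h' t * ((p1 t)\<^sup>2 + (q1 t)\<^sup>2) / (h t)\<^sup>2" for t
  have dE: "(E has_real_derivative Ed t) (at t)" if t: "t \<notin> S" for t
  proof -
    have ht: "h t \<noteq> 0" using hp by (simp add: less_imp_neq[symmetric])
    have dP: "((\<lambda>t. (p t)\<^sup>2 + (q t)\<^sup>2) has_real_derivative 2 * p t * p1 t + 2 * q t * q1 t) (at t)"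
      by (rule DERIV_cong[OF DERIV_add[OF DERIV_power[OF dp, of 2] DERIV_power[OF dq, of 2]]]) simp
    have dQ: "((\<lambda>t. (p1 t)\<^sup>2 + (q1 t)\<^sup>2) has_real_derivative 2 * p1 t * (- k2 t * p t) + 2 * q1 t * (- k2 t * q t)) (at t)"
      by (rule DERIV_cong[OF DERIV_add[OF DERIV_power[OF dp1[OF t], of 2] DERIV_power[OF dq1[OF t], of 2]]]) simp
    have d3: "((\<lambda>t. h t * ((p t)\<^sup>2 + (q t)\<^sup>2) + ((p1 t)\<^sup>2 + (q1 t)\<^sup>2) / h t) has_real_derivative
      h' t * ((p t)\<^sup>2 + (q t)\<^sup>2) + (2 * p t * p1 t + 2 * q t * q1 t) * h t
      + ((2 * p1 t * (- k2 t * p t) + 2 * q1 t * (- k2 t * q t)) * h t - ((p1 t)\<^sup>2 + (q1 t)\<^sup>2) * h' t) / (h t * h t)) (at t)"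
      by (rule DERIV_add[OF DERIV_mult[OF dh[rule_format] dP] DERIV_divide[OF dQ dh[rule_format] ht]])
    have "h' t * ((p t)\<^sup>2 + (q t)\<^sup>2) + (2 * p t * p1 t + 2 * q t * q1 t) * h t
      + ((2 * p1 t * (- k2 t * p t) + 2 * q1 t * (- k2 t * q t)) * h t - ((p1 t)\<^sup>2 + (q1 t)\<^sup>2) * h' t) / (h t * h t) = Ed t"
      using ht by (simp add: Ed_def field_simps power2_eq_square)
    with d3 show ?thesis unfolding Eeq by simp
  qed
  have Ebound: "\<bar>Ed t\<bar> \<le> (\<bar>h' t\<bar> + \<bar>(h t)\<^sup>2 - k2 t\<bar>) / h t * sqrt ((E t)\<^sup>2 - 4 * c\<^sup>2)" for t
    using E_deriv_bound[of "h t" "h' t" "p t" "q t" "p1 t" "q1 t" "k2 t"] hp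
    unfolding Ed_def Eeq Jeq[of t] by simp
  define g where "g t = ln (E t + \<epsilon> + sqrt ((E t + \<epsilon>)\<^sup>2 - 4 * c\<^sup>2))" for t
  define gd where "gd t = Ed t / sqrt ((E t + \<epsilon>)\<^sup>2 - 4 * c\<^sup>2)" for t
  have dg: "(g has_real_derivative gd t) (at t)" if t: "t \<notin> S" for t
  proof -
    have "((\<lambda>t. E t + \<epsilon>) has_real_derivative Ed t) (at t)"
      using DERIV_add[OF dE[OF t] DERIV_const[of \<epsilon>]] by simp
    moreover have "E t + \<epsilon> > 2 * \<bar>c\<bar>" using Ege[of t] eps by simp
    ultimately show ?thesis unfolding g_def[abs_def] gd_def by (rule g_deriv)
  qed
  have gd_lb: "gd t \<ge> - ((\<bar>h' t\<bar> + \<bar>(h t)\<^sup>2 - k2 t\<bar>) / h t)" for t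
  proof -
    define R where "R = sqrt ((E t + \<epsilon>)\<^sup>2 - 4 * c\<^sup>2)"
    define R0 where "R0 = sqrt ((E t)\<^sup>2 - 4 * c\<^sup>2)"
    define Cc where "Cc = (\<bar>h' t\<bar> + \<bar>(h t)\<^sup>2 - k2 t\<bar>) / h t"
    have Cc0: "Cc \<ge> 0" using hp[rule_format, of t] unfolding Cc_def by (intro divide_nonneg_pos) auto
    have "(2 * \<bar>c\<bar>)\<^sup>2 \<le> (E t)\<^sup>2" using Ege[of t] by (intro power_mono) auto
    then have a0: "(E t)\<^sup>2 - 4 * c\<^sup>2 \<ge> 0" by (simp add: power_mult_distrib)
    have E0: "E t \<ge> 0" using Ege[of t] by (smt (verit) abs_ge_zero)
    have "(E t)\<^sup>2 \<le> (E t + \<epsilon>)\<^sup>2" using E0 eps by (intro power_mono) auto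
    then have R0R: "R0 \<le> R" unfolding R0_def R_def by (intro real_sqrt_le_mono) simp
    have R0: "R0 \<ge> 0" unfolding R0_def using a0 by simp
    have Rpos: "R > 0" using R0R R0 a0
    proof -
      have "(2 * \<bar>c\<bar>)\<^sup>2 < (E t + \<epsilon>)\<^sup>2" using Ege[of t] eps by (intro power_strict_mono) auto
      then show ?thesis unfolding R_def by (simp add: power_mult_distrib)
    qed
    have "\<bar>Ed t\<bar> \<le> Cc * R0" using Ebound[of t] unfolding Cc_def R0_def .
    also have "\<dots> \<le> Cc * R" using R0R Cc0 by (simp add: mult_left_mono)
    finally have "\<bar>Ed t\<bar> / R \<le> Cc" using Rpos by (simp add: divide_le_eq)
    then have "\<bar>gd t\<bar> \<le> Cc" unfolding gd_def R_def[symmetric] using Rpos by simp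
    then show ?thesis unfolding Cc_def by linarith
  qed
  define G where "G t = g t + \<sigma> * ln (h t)" for t
  define Gd where "Gd t = gd t + \<sigma> * (h' t / h t)" for t
  have dG: "(G has_real_derivative Gd t) (at t)" if t: "t \<notin> S" for t
  proof -
    have "((\<lambda>t. ln (h t)) has_real_derivative inverse (h t) * h' t) (at t)"
      by (rule DERIV_chain2[OF DERIV_ln[OF hp[rule_format]] dh[rule_format]])
    from DERIV_add[OF dg[OF t] DERIV_cmult[OF this, of \<sigma>]] show ?thesis
      unfolding G_def[abs_def] Gd_def by (simp add: divide_inverse mult.commute mult.left_commute)
  qed
  have Gd_lb: "Gd t + f t \<ge> 0" for t
  proof -
    have s1: "\<sigma> * (h' t / h t) = \<bar>h' t\<bar> / h t" using sig[rule_format, of t] by (metis times_divide_eq_right)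
    have s2: "f t = \<bar>(h t)\<^sup>2 - k2 t\<bar> / h t" unfolding f_def by (simp add: abs_minus_commute)
    have s3: "(\<bar>h' t\<bar> + \<bar>(h t)\<^sup>2 - k2 t\<bar>) / h t = \<bar>h' t\<bar> / h t + \<bar>(h t)\<^sup>2 - k2 t\<bar> / h t"
      by (rule add_divide_distrib)
    show ?thesis using gd_lb[of t] s1 s2 s3 unfolding Gd_def by linarith
  qed
  have ch: "continuous_on UNIV h" using dh by (intro continuous_at_imp_continuous_on) (auto intro: DERIV_isCont)
  have cu: "continuous_on UNIV u"
    using du by (intro continuous_on_vector_derivative) (auto intro: has_vector_derivative_at_within)
  have cE: "continuous_on UNIV E"
    unfolding E_def EE_def[abs_def] using hp by (intro continuous_intros ch cu cu') (auto simp: less_imp_neq[symmetric])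
  have pos: "E t + \<epsilon> + sqrt ((E t + \<epsilon>)\<^sup>2 - 4 * c\<^sup>2) > 0" for t
  proof -
    have "(2 * \<bar>c\<bar>)\<^sup>2 \<le> (E t + \<epsilon>)\<^sup>2" using Ege[of t] eps by (intro power_mono) auto
    then have "(E t + \<epsilon>)\<^sup>2 - 4 * c\<^sup>2 \<ge> 0" by (simp add: power_mult_distrib)
    then have "sqrt ((E t + \<epsilon>)\<^sup>2 - 4 * c\<^sup>2) \<ge> 0" by (rule real_sqrt_ge_zero)
    moreover have "E t \<ge> 0" using Ege[of t] by (smt (verit) abs_ge_zero)
    ultimately show ?thesis using eps by linarith
  qed
  have cG: "continuous_on UNIV G"
    unfolding G_def[abs_def] g_def using pos hp
    by (intro continuous_intros cE ch) (auto simp: less_imp_neq[symmetric])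
  have IG: "(Gd has_integral (G y - G x)) {x..y}"
  proof (rule fundamental_theorem_of_calculus_interior_strong[OF lf_finite[OF lf, of x y] xy])
    show "continuous_on {x..y} G" using continuous_on_subset[OF cG] by blast
    fix t assume "t \<in> {x<..<y} - S \<inter> {x..y}"
    then have "t \<notin> S" by auto
    then show "(G has_vector_derivative Gd t) (at t)"
      using dG has_real_derivative_iff_has_vector_derivative by blast
  qed
  have If: "(f has_integral integral {x..y} f) {x..y}" using fint unfolding f_def[abs_def] by blast
  have "((\<lambda>t. Gd t + f t) has_integral (G y - G x + integral {x..y} f)) {x..y}"
    by (rule has_integral_add[OF IG If])
  then have "0 \<le> G y - G x + integral {x..y} f"
    by (rule has_integral_nonneg) (use Gd_lb in auto)
  then show ?thesis unfolding G_def g_def E_def f_def by (simp add: algebra_simps)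
qed


theorem mainTheorem6:
  fixes k2 h :: "real \<Rightarrow> real" and km kp :: real
    and u :: "real \<Rightarrow> complex" and r \<tau> :: complex
  assumes k2_pc: "piecewise_continuous k2"
    and km_pos: "km > 0" and kp_pos: "kp > 0"
    and k2_bot: "(k2 \<longlongrightarrow> km\<^sup>2) at_bot"
    and k2_top: "(k2 \<longlongrightarrow> kp\<^sup>2) at_top"
    and int_bot: "\<exists>a. (\<lambda>x. k2 x - km\<^sup>2) absolutely_integrable_on {..a}"
    and int_top: "\<exists>a. (\<lambda>x. k2 x - kp\<^sup>2) absolutely_integrable_on {a..}"
    and u_sol: "is_solution k2 u"
    and u_bot: "((\<lambda>x. u x - (cis (km * x) + r * cis (- km * x))) \<longlongrightarrow> 0) at_bot"
    and u_top: "((\<lambda>x. u x - \<tau> * cis (kp * x)) \<longlongrightarrow> 0) at_top"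
    and h_pos: "\<forall>x. h x > 0"
    and h_C1: "\<exists>h'. (\<forall>x. (h has_real_derivative h' x) (at x)) \<and> continuous_on UNIV h'"
    and h_mono: "mono h \<or> antimono h"
    and h_bot: "(h \<longlongrightarrow> km) at_bot"
    and h_top: "(h \<longlongrightarrow> kp) at_top"
    and I_fin: "(\<integral>\<^sup>+ x. ennreal (\<bar>k2 x - (h x)\<^sup>2\<bar> / h x) \<partial>lborel) < \<infinity>"
  shows "(kp / km) * (cmod \<tau>)\<^sup>2 \<ge>
     (sech ((1/2) * \<bar>ln (kp / km)\<bar>
        + (1/2) * enn2real (\<integral>\<^sup>+ x. ennreal (\<bar>k2 x - (h x)\<^sup>2\<bar> / h x) \<partial>lborel)))\<^sup>2"
proof -
  obtain u' S where lf: "locally_finite_set S"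
    and du: "\<forall>x. (u has_vector_derivative u' x) (at x)" and cu': "continuous_on UNIV u'"
    and d2: "\<forall>x. x \<notin> S \<longrightarrow> (u' has_vector_derivative (- (complex_of_real (k2 x) * u x))) (at x)"
    using u_sol unfolding is_solution_def by blast
  obtain h' where dh: "\<forall>x. (h has_real_derivative h' x) (at x)" using h_C1 by blast
  obtain c where Jc: "\<forall>x. Im (cnj (u x) * u' x) = c" using J_const[OF lf du cu' d2] by blast
  define E where "E = EE h u u'"
  define Z where "Z x = of_real (sqrt (h x)) * u x - \<i> * u' x / of_real (sqrt (h x))" for x
  define Zp where "Zp x = of_real (sqrt (h x)) * u x + \<i> * u' x / of_real (sqrt (h x))" for x
  have ZE: "(cmod (Z x))\<^sup>2 = E x + 2 * c" for x
    using EE_Z(1)[of h x u u'] h_pos unfolding Z_def E_def Jc[rule_format] by simp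
  have ZpE: "(cmod (Zp x))\<^sup>2 = E x - 2 * c" for x
    using EE_Z(2)[of h x u u'] h_pos unfolding Zp_def E_def Jc[rule_format] by simp
  have Ege: "E x \<ge> 2 * \<bar>c\<bar>" for x using EE_ge[of h x u u'] h_pos unfolding E_def Jc[rule_format] by simp

  define \<psi> where "\<psi> x = cis (km * x) + r * cis (- km * x)" for x
  define \<psi>' where "\<psi>' x = \<i> * of_real km * cis (km * x) + \<i> * of_real (- km) * r * cis (- km * x)" for x
  have l1b: "((\<lambda>x. u x - \<psi> x) \<longlongrightarrow> 0) at_bot" using u_bot by (simp add: \<psi>_def)
  have l2b: "((\<lambda>x. u' x - \<psi>' x) \<longlongrightarrow> 0) at_bot"
    using asym_bot[OF lf du cu' d2 k2_bot u_bot] by (simp add: \<psi>'_def)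
  have b1b: "cmod (\<psi> x) \<le> 1 + cmod r" for x
    unfolding \<psi>_def using norm_triangle_ineq[of "cis (km * x)" "r * cis (- km * x)"] by (simp add: norm_mult)
  have b2b: "cmod (\<psi>' x) \<le> km + km * cmod r" for x
    unfolding \<psi>'_def using norm_triangle_ineq[of "\<i> * of_real km * cis (km * x)" "\<i> * of_real (- km) * r * cis (- km * x)"] km_pos
    by (simp add: norm_mult)
  have Z0b: "cmod (of_real (sqrt km) * \<psi> x - \<i> * \<psi>' x / of_real (sqrt km)) = 2 * sqrt km" for x
  proof -
    define s where "s = sqrt km"
    have s0: "s > 0" using km_pos by (simp add: s_def)
    have kms: "(of_real km :: complex) = of_real s * of_real s" using km_pos by (simp add: s_def flip: of_real_mult)
    have "of_real (sqrt km) * \<psi> x - \<i> * \<psi>' x / of_real (sqrt km) = 2 * of_real s * cis (km * x)"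
      using s0 unfolding \<psi>_def \<psi>'_def s_def[symmetric] kms by (simp add: field_simps; simp add: kms)
    then show ?thesis using s0 by (simp add: norm_mult s_def)
  qed
  have Eb: "(E \<longlongrightarrow> 4 * km - 2 * c) at_bot"
  proof -
    have "((\<lambda>x. (cmod (Z x))\<^sup>2) \<longlongrightarrow> (2 * sqrt km)\<^sup>2) at_bot"
      by (rule norm_sq_limit[OF _ Z0b]) (use Z_limit(1)[OF h_bot km_pos h_pos l1b l2b b1b b2b] in \<open>simp add: Z_def\<close>)
    then have "((\<lambda>x. E x + 2 * c) \<longlongrightarrow> 4 * km) at_bot" using km_pos by (simp add: ZE power_mult_distrib)
    then have "((\<lambda>x. (E x + 2 * c) - 2 * c) \<longlongrightarrow> 4 * km - 2 * c) at_bot" by (intro tendsto_intros)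
    then show ?thesis by simp
  qed

  define \<phi> where "\<phi> x = \<tau> * cis (kp * x)" for x
  define \<phi>' where "\<phi>' x = \<i> * of_real kp * \<tau> * cis (kp * x)" for x
  have l1t: "((\<lambda>x. u x - \<phi> x) \<longlongrightarrow> 0) at_top" using u_top by (simp add: \<phi>_def)
  have l2t: "((\<lambda>x. u' x - \<phi>' x) \<longlongrightarrow> 0) at_top"
    using asym_top[OF lf du cu' d2 k2_top u_top] by (simp add: \<phi>'_def)
  have b1t: "cmod (\<phi> x) \<le> cmod \<tau>" for x unfolding \<phi>_def by (simp add: norm_mult)
  have b2t: "cmod (\<phi>' x) \<le> kp * cmod \<tau>" for x unfolding \<phi>'_def using kp_pos by (simp add: norm_mult)
  have Z0t: "cmod (of_real (sqrt kp) * \<phi> x - \<i> * \<phi>' x / of_real (sqrt kp)) = 2 * sqrt kp * cmod \<tau>" for x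
  proof -
    define s where "s = sqrt kp"
    have s0: "s > 0" using kp_pos by (simp add: s_def)
    have kps: "(of_real kp :: complex) = of_real s * of_real s" using kp_pos by (simp add: s_def flip: of_real_mult)
    have "of_real (sqrt kp) * \<phi> x - \<i> * \<phi>' x / of_real (sqrt kp) = 2 * of_real s * \<tau> * cis (kp * x)"
      using s0 unfolding \<phi>_def \<phi>'_def s_def[symmetric] kps by (simp add: field_simps; simp add: kps)
    then show ?thesis using s0 by (simp add: norm_mult s_def)
  qed
  have Zp0t: "cmod (of_real (sqrt kp) * \<phi> x + \<i> * \<phi>' x / of_real (sqrt kp)) = 0" for x
  proof -
    define s where "s = sqrt kp"
    have s0: "s > 0" using kp_pos by (simp add: s_def)
    have kps: "(of_real kp :: complex) = of_real s * of_real s" using kp_pos by (simp add: s_def flip: of_real_mult)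
    have "of_real (sqrt kp) * \<phi> x + \<i> * \<phi>' x / of_real (sqrt kp) = 0"
      using s0 unfolding \<phi>_def \<phi>'_def s_def[symmetric] kps by (simp add: field_simps; simp add: kps)
    then show ?thesis by simp
  qed
  have Et1: "((\<lambda>x. E x + 2 * c) \<longlongrightarrow> 4 * kp * (cmod \<tau>)\<^sup>2) at_top"
  proof -
    have "((\<lambda>x. (cmod (Z x))\<^sup>2) \<longlongrightarrow> (2 * sqrt kp * cmod \<tau>)\<^sup>2) at_top"
      by (rule norm_sq_limit[OF _ Z0t]) (use Z_limit(1)[OF h_top kp_pos h_pos l1t l2t b1t b2t] in \<open>simp add: Z_def\<close>)
    then show ?thesis using kp_pos by (simp add: ZE power_mult_distrib)
  qed
  have Et2: "((\<lambda>x. E x - 2 * c) \<longlongrightarrow> 0) at_top"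
  proof -
    have "((\<lambda>x. (cmod (Zp x))\<^sup>2) \<longlongrightarrow> 0\<^sup>2) at_top"
      by (rule norm_sq_limit[OF _ Zp0t]) (use Z_limit(2)[OF h_top kp_pos h_pos l1t l2t b1t b2t] in \<open>simp add: Zp_def\<close>)
    then show ?thesis by (simp add: ZpE)
  qed
  have Et: "(E \<longlongrightarrow> 2 * c) at_top"
  proof -
    have "((\<lambda>x. (E x - 2 * c) + 2 * c) \<longlongrightarrow> 0 + 2 * c) at_top" by (intro tendsto_intros Et2)
    then show ?thesis by simp
  qed
  have "((\<lambda>x. E x + 2 * c) \<longlongrightarrow> 2 * c + 2 * c) at_top" by (intro tendsto_intros Et)
  from tendsto_unique[OF trivial_limit_at_top_linorder Et1 this] have "4 * kp * (cmod \<tau>)\<^sup>2 = 2 * c + 2 * c" .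
  then have c_eq: "c = kp * (cmod \<tau>)\<^sup>2" by simp
  have c0: "c \<ge> 0" using c_eq kp_pos by simp
  have Age: "2 * c \<le> 4 * km - 2 * c"
    by (rule tendsto_lowerbound[OF Eb]) (use Ege in \<open>auto intro!: always_eventually\<close>, smt (verit) abs_ge_self)

  define f where "f x = \<bar>k2 x - (h x)\<^sup>2\<bar> / h x" for x
  define I where "I = enn2real (\<integral>\<^sup>+ x. ennreal (\<bar>k2 x - (h x)\<^sup>2\<bar> / h x) \<partial>lborel)"
  obtain S2 where lf2: "locally_finite_set S2" and ck2: "continuous_on (- S2) k2"
    using k2_pc unfolding piecewise_continuous_def by blast
  have k2m: "k2 \<in> borel_measurable borel"
    by (rule borel_measurable_continuous_countable_exceptions[OF lf_countable[OF lf2] ck2])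
  have ch: "continuous_on UNIV h" using dh by (intro continuous_at_imp_continuous_on) (auto intro: DERIV_isCont)
  have hm: "h \<in> borel_measurable borel" by (rule borel_measurable_continuous_onI[OF ch])
  have fm: "f \<in> borel_measurable borel" unfolding f_def[abs_def] using k2m hm by measurable
  have fnn: "0 \<le> f x" for x using h_pos by (simp add: f_def less_imp_le)
  have Ifin': "(\<integral>\<^sup>+ x. f x \<partial>lborel) < \<infinity>" using I_fin by (simp add: f_def)
  have fint: "f integrable_on UNIV" by (rule nn_integral_integrable_on[OF fm fnn Ifin'])
  have "(\<integral>\<^sup>+ x. f x \<partial>lborel) = integral UNIV f" by (rule nn_integral_lborel_eq_integral[OF fm fnn Ifin'])
  then have fI: "integral UNIV f = I"
    unfolding I_def f_def[symmetric] using integral_nonneg[OF fint fnn] by simp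
  have I0: "I \<ge> 0" unfolding I_def by simp
  have fints: "f integrable_on {x..y}" for x y using integrable_on_subinterval[OF fint] by simp
  have fsub: "integral {x..y} f \<le> I" for x y
    unfolding fI[symmetric]
    by (rule integral_subset_le) (use fint fnn fints in auto)

  define L where "L = \<bar>ln (kp / km)\<bar>"
  define \<sigma> :: real where "\<sigma> = (if mono h then 1 else -1)"
  have sig: "\<forall>x. \<sigma> * h' x = \<bar>h' x\<bar>"
  proof
    fix x
    show "\<sigma> * h' x = \<bar>h' x\<bar>"
    proof (cases "mono h")
      case True
      then show ?thesis using deriv_nonneg_mono[OF True dh[rule_format, of x]] by (simp add: \<sigma>_def)
    next
      case False
      then have "antimono h" using h_mono by blast
      then show ?thesis using deriv_nonpos_antimono[OF _ dh[rule_format, of x]] False by (simp add: \<sigma>_def)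
    qed
  qed
  have lnb: "\<sigma> * (ln (h y) - ln (h x)) \<le> L" for x y
  proof (cases "mono h")
    case True
    have "h y \<le> kp" by (rule mono_le_lim_top[OF True h_top])
    moreover have "km \<le> h x" by (rule mono_ge_lim_bot[OF True h_bot])
    ultimately have "ln (h y) \<le> ln kp" "ln km \<le> ln (h x)" using h_pos[rule_format, of y] h_pos[rule_format, of x] km_pos kp_pos by auto
    then have "ln (h y) - ln (h x) \<le> ln (kp / km)" using km_pos kp_pos by (simp add: ln_div)
    then show ?thesis using True by (simp add: \<sigma>_def L_def)
  next
    case False
    then have am: "antimono h" using h_mono by blast
    have "kp \<le> h y" by (rule antimono_ge_lim_top[OF am h_top])
    moreover have "h x \<le> km" by (rule antimono_le_lim_bot[OF am h_bot])
    ultimately have "ln kp \<le> ln (h y)" "ln (h x) \<le> ln km" using h_pos[rule_format, of y] h_pos[rule_format, of x] km_pos kp_pos by auto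
    then have "-(ln (h y) - ln (h x)) \<le> - ln (kp / km)" using km_pos kp_pos by (simp add: ln_div)
    then show ?thesis using False by (simp add: \<sigma>_def L_def)
  qed

  define A where "A = 4 * km - 2 * c"
  have key: "ln (A + e + sqrt ((A + e)\<^sup>2 - 4 * c\<^sup>2)) \<le> ln (2 * c + e + sqrt ((2 * c + e)\<^sup>2 - 4 * c\<^sup>2)) + (L + I)"
    if e: "e > 0" for e
  proof -
    define g where "g t = ln (E t + e + sqrt ((E t + e)\<^sup>2 - 4 * c\<^sup>2))" for t
    have ineq: "g x \<le> g y + (L + I)" if xy: "x \<le> y" for x y
    proof -
      have "g x \<le> g y + \<sigma> * (ln (h y) - ln (h x)) + integral {x..y} f"
        using comparison[OF lf du cu' d2 dh h_pos Jc sig e xy] fints[of x y]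
        unfolding g_def E_def f_def by simp
      then show ?thesis using lnb[of y x] fsub[of x y] by linarith
    qed
    have posq: "B + e + sqrt ((B + e)\<^sup>2 - 4 * c\<^sup>2) \<noteq> 0" if B: "2 * c \<le> B" for B
    proof -
      have "(2 * c)\<^sup>2 \<le> (B + e)\<^sup>2" using B c0 e by (intro power_mono) auto
      then have "(B + e)\<^sup>2 - 4 * c\<^sup>2 \<ge> 0" by (simp add: power_mult_distrib)
      then have "sqrt ((B + e)\<^sup>2 - 4 * c\<^sup>2) \<ge> 0" by (rule real_sqrt_ge_zero)
      then show ?thesis using B c0 e by linarith
    qed
    have gt: "(g \<longlongrightarrow> ln (2 * c + e + sqrt ((2 * c + e)\<^sup>2 - 4 * c\<^sup>2))) at_top"
      unfolding g_def[abs_def] using posq[of "2 * c"] by (intro tendsto_intros Et) auto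
    have gb: "(g \<longlongrightarrow> ln (A + e + sqrt ((A + e)\<^sup>2 - 4 * c\<^sup>2))) at_bot"
      unfolding g_def[abs_def] A_def using posq[of "4 * km - 2 * c"] Age by (intro tendsto_intros Eb) auto
    have gx: "g x \<le> ln (2 * c + e + sqrt ((2 * c + e)\<^sup>2 - 4 * c\<^sup>2)) + (L + I)" for x
    proof (rule tendsto_le[OF trivial_limit_at_top_linorder _ tendsto_const])
      show "((\<lambda>y. g y + (L + I)) \<longlongrightarrow> ln (2 * c + e + sqrt ((2 * c + e)\<^sup>2 - 4 * c\<^sup>2)) + (L + I)) at_top"
        by (intro tendsto_intros gt)
      show "\<forall>\<^sub>F y in at_top. g x \<le> g y + (L + I)"
        unfolding eventually_at_top_linorder using ineq by blast
    qed
    show ?thesis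
      by (rule tendsto_le[OF trivial_limit_at_bot_linorder tendsto_const gb]) (use gx in \<open>auto intro: always_eventually\<close>)
  qed
  have W: "A + sqrt (A\<^sup>2 - 4 * c\<^sup>2) \<le> 2 * c * exp (L + I)"
    by (rule eps_lemma[OF Age[folded A_def] c0 key])
  define th where "th = (1/2) * L + (1/2) * I"
  have th0: "th \<ge> 0" using I0 by (simp add: th_def L_def)
  have "c / km \<ge> (sech th)\<^sup>2"
    by (rule final_alg[OF km_pos th0 Age]) (use W in \<open>simp add: A_def th_def\<close>)
  then show ?thesis using c_eq by (simp add: th_def L_def I_def)
qed


end
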